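(* Let $P$ be a primitive monoid containing order-ideals $I,I'$ with $I\cap I'=0$, and let $\varphi\colon I\to I'$ be a monoid isomorphism. Let $Q$ be the crowned pushout of $(P,I,I',\varphi)$ with projection $\pi\colon P\to Q$. Then $Q$ is a primitive monoid, $\pi$ maps $\mathbb P(P)\setminus\mathbb P(I')$ bijectively onto $\mathbb P(Q)$, and under this identification the order on $\mathbb P(Q)$ is the one generated by the order of $\mathbb P(P)$ restricted to $\mathbb P(P)\setminus\mathbb P(I')$ together with the additional relations $p<q$ whenever $p\in\mathbb P(I)$, $q\in\mathbb P(P)\setminus(\mathbb P(I)\sqcup\mathbb P(I'))$ and $\varphi(p)<q$ in $\mathbb P(P)$. Moreover, a prime $p\in\mathbb P(Q)$ is free in $Q$ if and only if it is free in $P$.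
   Context: Monoids are abelian. Algebraic preorder: $x\le y$ iff $y=x+z$. A prime is $p$ with $p\not\le0$ and $p\le a+b\Rightarrow p\le a$ or $p\le b$; a primitive monoid is an antisymmetric ($\le$ a partial order), primely generated (every element a sum of primes) refinement monoid; $\mathbb P(M)$ denotes its set of primes ordered by the algebraic order, and for an order-ideal $S$, $\mathbb P(S)=\mathbb P(M)\cap S$. A prime $p$ is free if $p+p\ne p$. An order-ideal is a nonempty $I$ with $x+y\in I\iff x,y\in I$. The crowned pushout of $(P,I,I',\varphi)$ is the coequalizer, in the category of monoids, of the inclusion $I\to P$ and the composite $I\xrightarrow{\varphi}I'\hookrightarrow P$. *)

theory Defs
  imports Main
begin

definition alg_le :: "'a::comm_monoid_add \<Rightarrow> 'a \<Rightarrow> bool" where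
  "alg_le x y \<longleftrightarrow> (\<exists>z. y = x + z)"

definition alg_less :: "'a::comm_monoid_add \<Rightarrow> 'a \<Rightarrow> bool" where
  "alg_less x y \<longleftrightarrow> alg_le x y \<and> x \<noteq> y"

definition is_prime_elem :: "'a::comm_monoid_add \<Rightarrow> bool" where
  "is_prime_elem p \<longleftrightarrow> \<not> alg_le p 0 \<and>
     (\<forall>a b. alg_le p (a + b) \<longrightarrow> alg_le p a \<or> alg_le p b)"

definition primes_of :: "'a::comm_monoid_add set" where
  "primes_of = {p. is_prime_elem p}"

definition free_prime :: "'a::comm_monoid_add \<Rightarrow> bool" where
  "free_prime p \<longleftrightarrow> p + p \<noteq> p"

definition refinement_monoid :: "'a::comm_monoid_add itself \<Rightarrow> bool" where
  "refinement_monoid _ \<longleftrightarrow> (\<forall>a b c d :: 'a. a + b = c + d \<longrightarrow>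
     (\<exists>z11 z12 z21 z22. a = z11 + z12 \<and> b = z21 + z22 \<and> c = z11 + z21 \<and> d = z12 + z22))"

definition antisymmetric_monoid :: "'a::comm_monoid_add itself \<Rightarrow> bool" where
  "antisymmetric_monoid _ \<longleftrightarrow> (\<forall>x y :: 'a. alg_le x y \<and> alg_le y x \<longrightarrow> x = y)"

definition primely_generated :: "'a::comm_monoid_add itself \<Rightarrow> bool" where
  "primely_generated _ \<longleftrightarrow> (\<forall>x :: 'a. \<exists>xs. set xs \<subseteq> primes_of \<and> x = sum_list xs)"

definition primitive_monoid :: "'a::comm_monoid_add itself \<Rightarrow> bool" where
  "primitive_monoid T \<longleftrightarrow> antisymmetric_monoid T \<and> primely_generated T \<and> refinement_monoid T"

definition order_ideal :: "'a::comm_monoid_add set \<Rightarrow> bool" where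
  "order_ideal I \<longleftrightarrow> I \<noteq> {} \<and> (\<forall>x y. x + y \<in> I \<longleftrightarrow> x \<in> I \<and> y \<in> I)"

definition monoid_hom :: "('a::comm_monoid_add \<Rightarrow> 'b::comm_monoid_add) \<Rightarrow> bool" where
  "monoid_hom f \<longleftrightarrow> f 0 = 0 \<and> (\<forall>x y. f (x + y) = f x + f y)"

definition monoid_iso_on :: "('a::comm_monoid_add \<Rightarrow> 'a) \<Rightarrow> 'a set \<Rightarrow> 'a set \<Rightarrow> bool" where
  "monoid_iso_on f I J \<longleftrightarrow> bij_betw f I J \<and> f 0 = 0 \<and>
     (\<forall>x\<in>I. \<forall>y\<in>I. f (x + y) = f x + f y)"

text \<open>The monoid congruence on P generated by the pairs (x, phi x), x in I.
  The coequalizer (in monoids) of the inclusion I -> P and I -> I' -> P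
  is the quotient of P by this congruence.\<close>
inductive_set crown_cong :: "'a::comm_monoid_add set \<Rightarrow> ('a \<Rightarrow> 'a) \<Rightarrow> ('a \<times> 'a) set"
  for I :: "'a set" and \<phi> :: "'a \<Rightarrow> 'a" where
  gen: "x \<in> I \<Longrightarrow> (x, \<phi> x) \<in> crown_cong I \<phi>"
| refl: "(x, x) \<in> crown_cong I \<phi>"
| sym: "(x, y) \<in> crown_cong I \<phi> \<Longrightarrow> (y, x) \<in> crown_cong I \<phi>"
| trans: "(x, y) \<in> crown_cong I \<phi> \<Longrightarrow> (y, z) \<in> crown_cong I \<phi> \<Longrightarrow> (x, z) \<in> crown_cong I \<phi>"
| add: "(x, y) \<in> crown_cong I \<phi> \<Longrightarrow> (x + z, y + z) \<in> crown_cong I \<phi>"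

text \<open>pi : P -> Q is (the projection of) the crowned pushout of (P, I, I', phi):
  a surjective monoid homomorphism whose kernel congruence is exactly crown_cong.\<close>
definition crowned_pushout :: "'a::comm_monoid_add set \<Rightarrow> ('a \<Rightarrow> 'a) \<Rightarrow> ('a \<Rightarrow> 'b::comm_monoid_add) \<Rightarrow> bool" where
  "crowned_pushout I \<phi> \<pi> \<longleftrightarrow> monoid_hom \<pi> \<and> surj \<pi> \<and>
     (\<forall>x y. \<pi> x = \<pi> y \<longleftrightarrow> (x, y) \<in> crown_cong I \<phi>)"

end

theory Submission
  imports Defs
begin

lemma alg_le_refl[simp]: "alg_le x x"
  unfolding alg_le_def by (metis add_0_right)
lemma alg_le_0[simp]: "alg_le 0 x"
  unfolding alg_le_def by simp
lemma alg_le_trans: "alg_le x y \<Longrightarrow> alg_le y z \<Longrightarrow> alg_le x z"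
  unfolding alg_le_def by (metis add.assoc)
lemma alg_le_addR[simp]: "alg_le x (x + y)"
  unfolding alg_le_def by blast
lemma alg_le_addL[simp]: "alg_le x (y + x)"
  unfolding alg_le_def by (metis add.commute)
lemma alg_le_add_mono: "alg_le a b \<Longrightarrow> alg_le c d \<Longrightarrow> alg_le (a + c) (b + d)"
  unfolding alg_le_def by (metis add.assoc add.commute)
lemma alg_le_hom: "monoid_hom f \<Longrightarrow> alg_le a b \<Longrightarrow> alg_le (f a) (f b)"
  unfolding alg_le_def monoid_hom_def by metis

lemma sum_list_le: "x \<in> set xs \<Longrightarrow> alg_le x (sum_list (xs::'a::comm_monoid_add list))"
proof (induction xs)
  case Nil then show ?case by simp
next
  case (Cons a xs)
  then show ?case
    by (auto intro: alg_le_trans[OF _ alg_le_addL])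
qed

lemma prime_le_sum_list:
  assumes "is_prime_elem p" "alg_le p (sum_list xs)"
  shows "\<exists>x\<in>set xs. alg_le p x"
  using assms(2)
proof (induction xs)
  case Nil then show ?case using assms(1) by (simp add: is_prime_elem_def)
next
  case (Cons a xs)
  then show ?case using assms(1) unfolding is_prime_elem_def by auto
qed

lemma hom_sum_list: "monoid_hom f \<Longrightarrow> f (sum_list xs) = sum_list (map f xs)"
  by (induction xs) (auto simp: monoid_hom_def)

lemma sum_list_filter_split:
  "sum_list (xs::'a::comm_monoid_add list) = sum_list (filter P xs) + sum_list (filter (\<lambda>x. \<not> P x) xs)"
  by (induction xs) (auto simp: add_ac)

fun mul :: "nat \<Rightarrow> 'a::comm_monoid_add \<Rightarrow> 'a" where
  "mul 0 a = 0"
| "mul (Suc n) a = a + mul n a"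

lemma mul_add: "mul (m + n) a = mul m a + mul n a"
  by (induction m) (auto simp: add_ac)

locale pm =
  assumes anti: "antisymmetric_monoid TYPE('a::comm_monoid_add)"
    and pg: "primely_generated TYPE('a)"
    and rf: "refinement_monoid TYPE('a)"
begin

lemma antisym: "alg_le x y \<Longrightarrow> alg_le y x \<Longrightarrow> x = (y::'a)"
  using anti unfolding antisymmetric_monoid_def by blast

lemma refine: "(a::'a) + b = c + d \<Longrightarrow>
  \<exists>z11 z12 z21 z22. a = z11 + z12 \<and> b = z21 + z22 \<and> c = z11 + z21 \<and> d = z12 + z22"
  using rf unfolding refinement_monoid_def by blast

lemma gen: "\<exists>xs. set xs \<subseteq> primes_of \<and> (x::'a) = sum_list xs"
  using pg unfolding primely_generated_def by blast

lemma le_split: "alg_le (x::'a) (a + b) \<Longrightarrow> \<exists>x1 x2. x = x1 + x2 \<and> alg_le x1 a \<and> alg_le x2 b"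
proof -
  assume "alg_le x (a + b)"
  then obtain z where "a + b = x + z" unfolding alg_le_def by blast
  from refine[OF this] obtain z11 z12 z21 z22 where
    "a = z11 + z12" "b = z21 + z22" "x = z11 + z21" "z = z12 + z22" by blast
  then show ?thesis by (intro exI[of _ z11] exI[of _ z21]) auto
qed

lemma prime_ne0: "is_prime_elem (p::'a) \<Longrightarrow> p \<noteq> 0"
  unfolding is_prime_elem_def by auto

lemma prime_le_add: "is_prime_elem p \<Longrightarrow> alg_le p (a + b) \<Longrightarrow> alg_le p a \<or> alg_le p b"
  unfolding is_prime_elem_def by blast

lemma prime_le_self_sum: "is_prime_elem (p::'a) \<Longrightarrow> p = a + b \<Longrightarrow> p = a \<or> p = b"
proof -
  assume pr: "is_prime_elem p" and e: "p = a + b"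
  then have "alg_le p a \<or> alg_le p b" using prime_le_add[of p a b] by simp
  moreover have "alg_le a p" "alg_le b p" using e by auto
  ultimately show ?thesis using antisym by blast
qed

lemma lemA: "is_prime_elem (p::'a) \<Longrightarrow> is_prime_elem r \<Longrightarrow> alg_less p r \<Longrightarrow> p + r = r"
proof -
  assume pp: "is_prime_elem p" and pr: "is_prime_elem r" and l: "alg_less p r"
  then obtain z where r: "r = p + z" unfolding alg_less_def alg_le_def by blast
  then have "alg_le r p \<or> alg_le r z" using prime_le_add[OF pr] by simp
  moreover have "\<not> alg_le r p" using l antisym unfolding alg_less_def by blast
  ultimately have "alg_le r z" by blast
  moreover have "alg_le z r" using r by simp
  ultimately have "z = r" using antisym by blast
  then show ?thesis using r by simp
qed

lemma split_mul:
  assumes pr: "is_prime_elem (r::'a)"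
  shows "alg_le (mul n r) (a + b) \<Longrightarrow> \<exists>n1 n2. n = n1 + n2 \<and> alg_le (mul n1 r) a \<and> alg_le (mul n2 r) b"
proof (induction n arbitrary: a b)
  case 0 then show ?case by (intro exI[of _ 0]) simp
next
  case (Suc n)
  from le_split[OF Suc.prems[simplified]] obtain x1 x2 where
    x: "r + mul n r = x1 + x2" "alg_le x1 a" "alg_le x2 b" by blast
  from refine[OF x(1)] obtain e11 e12 e21 e22 where
    e: "r = e11 + e12" "mul n r = e21 + e22" "x1 = e11 + e21" "x2 = e12 + e22" by blast
  from Suc.IH[of e21 e22] e(2) obtain n1 n2 where
    n: "n = n1 + n2" "alg_le (mul n1 r) e21" "alg_le (mul n2 r) e22" by auto
  have "alg_le r e11 \<or> alg_le r e12" using prime_le_add[OF pr] e(1) by simp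
  then show ?case
  proof
    assume "alg_le r e11"
    then have "alg_le (mul (Suc n1) r) x1" using e(3) n(2) by (simp add: alg_le_add_mono)
    moreover have "alg_le (mul n2 r) b" using n(3) e(4) x(3)
      by (metis alg_le_addL alg_le_trans)
    ultimately have "Suc n = Suc n1 + n2 \<and> alg_le (mul (Suc n1) r) a \<and> alg_le (mul n2 r) b"
      using n x by (auto intro: alg_le_trans)
    then show ?thesis by blast
  next
    assume "alg_le r e12"
    then have "alg_le (mul (Suc n2) r) x2" using e(4) n(3)
      by (metis add.commute alg_le_add_mono mul.simps(2))
    moreover have "alg_le (mul n1 r) a" using n(2) e(3) x(2)
      by (metis alg_le_addL alg_le_trans)
    ultimately have "Suc n = n1 + Suc n2 \<and> alg_le (mul n1 r) a \<and> alg_le (mul (Suc n2) r) b"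
      using n x e by (auto intro: alg_le_trans)
    then show ?thesis by blast
  qed
qed

definition Pn :: "'a \<Rightarrow> 'a \<Rightarrow> nat \<Rightarrow> 'a \<Rightarrow> bool" where
  "Pn q q2 n a \<longleftrightarrow> (\<exists>i j. i + j = n \<and> alg_le (mul i q + mul j q2) a)"

lemma Pn_0[simp]: "Pn q q2 0 a"
  unfolding Pn_def by simp

lemma Pn_add:
  assumes pq: "is_prime_elem q" and pq2: "is_prime_elem q2"
  shows "Pn q q2 n (a + b) \<longleftrightarrow> (\<exists>n1 n2. n = n1 + n2 \<and> Pn q q2 n1 a \<and> Pn q q2 n2 b)"
proof
  assume "Pn q q2 n (a + b)"
  then obtain i j where ij: "i + j = n" "alg_le (mul i q + mul j q2) (a + b)" unfolding Pn_def by blast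
  from le_split[OF ij(2)] obtain x1 x2 where
    x: "mul i q + mul j q2 = x1 + x2" "alg_le x1 a" "alg_le x2 b" by blast
  from refine[OF x(1)] obtain e11 e12 e21 e22 where
    e: "mul i q = e11 + e12" "mul j q2 = e21 + e22" "x1 = e11 + e21" "x2 = e12 + e22" by blast
  from split_mul[OF pq, of i e11 e12] e(1) obtain i1 i2 where
    i: "i = i1 + i2" "alg_le (mul i1 q) e11" "alg_le (mul i2 q) e12" by auto
  from split_mul[OF pq2, of j e21 e22] e(2) obtain j1 j2 where
    j: "j = j1 + j2" "alg_le (mul j1 q2) e21" "alg_le (mul j2 q2) e22" by auto
  have "alg_le (mul i1 q + mul j1 q2) a"
    using alg_le_add_mono[OF i(2) j(2)] e(3) x(2) alg_le_trans by blast
  moreover have "alg_le (mul i2 q + mul j2 q2) b"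
    using alg_le_add_mono[OF i(3) j(3)] e(4) x(3) alg_le_trans by blast
  ultimately have "n = (i1 + j1) + (i2 + j2) \<and> Pn q q2 (i1 + j1) a \<and> Pn q q2 (i2 + j2) b"
    using ij i j unfolding Pn_def by auto
  then show "\<exists>n1 n2. n = n1 + n2 \<and> Pn q q2 n1 a \<and> Pn q q2 n2 b" by blast
next
  assume "\<exists>n1 n2. n = n1 + n2 \<and> Pn q q2 n1 a \<and> Pn q q2 n2 b"
  then obtain i1 j1 i2 j2 where
    h: "n = (i1 + j1) + (i2 + j2)" "alg_le (mul i1 q + mul j1 q2) a" "alg_le (mul i2 q + mul j2 q2) b"
    unfolding Pn_def by blast
  have "mul (i1 + i2) q + mul (j1 + j2) q2 = (mul i1 q + mul j1 q2) + (mul i2 q + mul j2 q2)"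
    by (simp add: mul_add add_ac)
  then have "alg_le (mul (i1 + i2) q + mul (j1 + j2) q2) (a + b)"
    using alg_le_add_mono[OF h(2) h(3)] by simp
  then show "Pn q q2 n (a + b)" unfolding Pn_def using h(1)
    by (intro exI[of _ "i1 + i2"] exI[of _ "j1 + j2"]) simp
qed

lemma le_mul_prime: "alg_le (mul i q) c \<Longrightarrow> i > 0 \<Longrightarrow> alg_le q c"
  by (cases i) (auto intro: alg_le_trans[OF alg_le_addR])

lemma free_no_double: "is_prime_elem (y::'a) \<Longrightarrow> free_prime y \<Longrightarrow> \<not> alg_le (y + y) y"
  using antisym[of "y + y" y] unfolding free_prime_def by auto

lemma Bound:
  assumes pq: "is_prime_elem q" and pq2: "is_prime_elem q2"
    and fq: "free_prime q" and fq2: "free_prime q2"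
    and inc: "q2 = q \<or> (\<not> alg_le q q2 \<and> \<not> alg_le q2 q)"
    and nc: "\<not> alg_le q c" "\<not> alg_le q2 c"
  shows "set ys \<subseteq> {q, q2} \<Longrightarrow> Pn q q2 n (sum_list ys + c) \<Longrightarrow> n \<le> length ys"
proof (induction ys arbitrary: n)
  case Nil
  then obtain i j where ij: "i + j = n" "alg_le (mul i q + mul j q2) c" unfolding Pn_def by auto
  have "i = 0" using ij(2) nc(1) le_mul_prime[of i q c] by (metis alg_le_addR alg_le_trans gr0I)
  moreover have "j = 0" using ij(2) nc(2) le_mul_prime[of j q2 c] by (metis alg_le_addL alg_le_trans gr0I)
  ultimately show ?case using ij by simp
next
  case (Cons y ys)
  have "Pn q q2 n (y + (sum_list ys + c))" using Cons.prems by (simp add: add.assoc)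
  then obtain n1 n2 where n: "n = n1 + n2" "Pn q q2 n1 y" "Pn q q2 n2 (sum_list ys + c)"
    using Pn_add[OF pq pq2] by blast
  have "n2 \<le> length ys" using Cons n by auto
  moreover have "n1 \<le> 1"
  proof (rule ccontr)
    assume "\<not> n1 \<le> 1"
    obtain i j where ij: "i + j = n1" "alg_le (mul i q + mul j q2) y" using n(2) unfolding Pn_def by blast
    have y: "y = q \<or> y = q2" using Cons.prems by auto
    have yp: "is_prime_elem y" "free_prime y" using y pq pq2 fq fq2 by auto
    have key: "\<And>u v. u \<in> {q, q2} \<Longrightarrow> v \<in> {q, q2} \<Longrightarrow> alg_le (u + v) y \<Longrightarrow> False"
    proof -
      fix u v assume u: "u \<in> {q, q2}" and v: "v \<in> {q, q2}" and l: "alg_le (u + v) y"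
      have "alg_le u y" "alg_le v y" using l alg_le_trans alg_le_addR alg_le_addL by blast+
      then have "u = y" "v = y" using u v y inc by auto
      then show False using l free_no_double[OF yp] by simp
    qed
    consider (a) "i \<ge> 2" | (b) "j \<ge> 2" | (c) "i \<ge> 1 \<and> j \<ge> 1" using ij \<open>\<not> n1 \<le> 1\<close> by linarith
    then show False
    proof cases
      case a
      then obtain k where "i = Suc (Suc k)" by (metis add_2_eq_Suc le_Suc_ex)
      then have "alg_le (q + q) (mul i q + mul j q2)"
        by (metis add.assoc alg_le_addR mul.simps(2))
      then show False using key ij(2) alg_le_trans by blast
    next
      case b
      then obtain k where "j = Suc (Suc k)" by (metis add_2_eq_Suc le_Suc_ex)
      then have "alg_le (q2 + q2) (mul i q + mul j q2)"
        by (metis add.assoc alg_le_addL alg_le_trans alg_le_addR mul.simps(2))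
      then show False using key ij(2) alg_le_trans by blast
    next
      case c
      then obtain k l where "i = Suc k" "j = Suc l" by (metis Suc_le_D One_nat_def)
      then have "alg_le (q + q2) (mul i q + mul j q2)"
        by (simp add: alg_le_add_mono)
      then show False using key ij(2) alg_le_trans by blast
    qed
  qed
  ultimately show ?case using n by simp
qed

lemma FindAbove:
  assumes pq: "is_prime_elem q" and pq2: "is_prime_elem q2"
    and fq: "free_prime q" and fq2: "free_prime q2"
    and inc: "q2 = q \<or> (\<not> alg_le q q2 \<and> \<not> alg_le q2 q)"
    and all: "\<forall>n. Pn q q2 n x"
  shows "\<exists>r. is_prime_elem r \<and> alg_le r x \<and> (alg_less q r \<or> alg_less q2 r)"
proof (rule ccontr)
  assume na: "\<not> ?thesis"
  obtain rs where rs: "set rs \<subseteq> primes_of" "x = sum_list rs" using gen by blast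
  define ys where "ys = filter (\<lambda>r. r = q \<or> r = q2) rs"
  define zs where "zs = filter (\<lambda>r. \<not> (r = q \<or> r = q2)) rs"
  have x: "x = sum_list ys + sum_list zs" using rs(2) sum_list_filter_split unfolding ys_def zs_def by blast
  have nz: "\<not> alg_le s (sum_list zs)" if s: "s = q \<or> s = q2" "is_prime_elem s" for s
  proof
    assume "alg_le s (sum_list zs)"
    then obtain z where z: "z \<in> set zs" "alg_le s z" using prime_le_sum_list[OF s(2)] by blast
    have "z \<in> set rs" "z \<noteq> q" "z \<noteq> q2" using z(1) unfolding zs_def by auto
    then have "is_prime_elem z" "alg_le z x" using rs sum_list_le primes_of_def by auto
    moreover have "alg_less s z" using z(2) s(1) \<open>z \<noteq> q\<close> \<open>z \<noteq> q2\<close> unfolding alg_less_def by auto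
    ultimately show False using na s(1) by blast
  qed
  have "set ys \<subseteq> {q, q2}" unfolding ys_def by auto
  from Bound[OF pq pq2 fq fq2 inc nz[OF _ pq] nz[OF _ pq2] this, of "Suc (length ys)"]
  show False using all x by auto
qed

end

locale crown = pm +
  fixes I I' :: "'a::comm_monoid_add set" and \<phi> :: "'a \<Rightarrow> 'a" and \<pi> :: "'a \<Rightarrow> 'b::comm_monoid_add"
  assumes oI: "order_ideal I" and oI': "order_ideal I'" and disj: "I \<inter> I' = {0}"
    and iso: "monoid_iso_on \<phi> I I'" and cp: "crowned_pushout I \<phi> \<pi>"
begin

lemma down: "alg_le a b \<Longrightarrow> b \<in> I \<Longrightarrow> a \<in> I"
  using oI unfolding order_ideal_def alg_le_def by blast
lemma down': "alg_le a b \<Longrightarrow> b \<in> I' \<Longrightarrow> a \<in> I'"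
  using oI' unfolding order_ideal_def alg_le_def by blast
lemma addI: "a \<in> I \<Longrightarrow> b \<in> I \<Longrightarrow> a + b \<in> I"
  using oI unfolding order_ideal_def by blast
lemma addI': "a \<in> I' \<Longrightarrow> b \<in> I' \<Longrightarrow> a + b \<in> I'"
  using oI' unfolding order_ideal_def by blast
lemma sumI: "x + y \<in> I \<longleftrightarrow> x \<in> I \<and> y \<in> I"
  using oI unfolding order_ideal_def by blast
lemma sumI': "x + y \<in> I' \<longleftrightarrow> x \<in> I' \<and> y \<in> I'"
  using oI' unfolding order_ideal_def by blast
lemma zI[simp]: "0 \<in> I" using disj by blast
lemma zI'[simp]: "0 \<in> I'" using disj by blast
lemma both0: "a \<in> I \<Longrightarrow> a \<in> I' \<Longrightarrow> a = 0" using disj by blast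
lemma prime_notboth: "is_prime_elem p \<Longrightarrow> p \<in> I \<Longrightarrow> p \<notin> I'"
  using both0 prime_ne0 by blast

lemma bij: "bij_betw \<phi> I I'"
  using iso unfolding monoid_iso_on_def by (rule conjunct1)
lemma phi0[simp]: "\<phi> 0 = 0"
  using iso unfolding monoid_iso_on_def by (simp only:)
lemma phi_add: "x \<in> I \<Longrightarrow> y \<in> I \<Longrightarrow> \<phi> (x + y) = \<phi> x + \<phi> y"
  using iso unfolding monoid_iso_on_def by (simp only: Ball_def)

lemma phiI: "x \<in> I \<Longrightarrow> \<phi> x \<in> I'" using bij_betw_apply[OF bij] .
lemma phi_inj: "x \<in> I \<Longrightarrow> y \<in> I \<Longrightarrow> \<phi> x = \<phi> y \<Longrightarrow> x = y"
  using bij unfolding bij_betw_def inj_on_def by blast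

definition \<psi> where "\<psi> = inv_into I \<phi>"
lemma psiI: "y \<in> I' \<Longrightarrow> \<psi> y \<in> I"
  unfolding \<psi>_def using bij by (metis bij_betw_def inv_into_into)
lemma phipsi: "y \<in> I' \<Longrightarrow> \<phi> (\<psi> y) = y"
  unfolding \<psi>_def using bij by (metis bij_betw_def f_inv_into_f)
lemma psiphi: "x \<in> I \<Longrightarrow> \<psi> (\<phi> x) = x"
  unfolding \<psi>_def using bij by (metis bij_betw_def inv_into_f_f)
lemma psi_add: "x \<in> I' \<Longrightarrow> y \<in> I' \<Longrightarrow> \<psi> (x + y) = \<psi> x + \<psi> y"
proof -
  assume x: "x \<in> I'" and y: "y \<in> I'"
  have "\<phi> (\<psi> x + \<psi> y) = x + y" using phi_add[OF psiI[OF x] psiI[OF y]] phipsi x y by simp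
  then have "\<psi> (x + y) = \<psi> (\<phi> (\<psi> x + \<psi> y))" by simp
  also have "\<dots> = \<psi> x + \<psi> y" using psiphi addI psiI x y by simp
  finally show ?thesis .
qed

lemma phi_le: "p \<in> I \<Longrightarrow> x \<in> I \<Longrightarrow> alg_le (\<phi> p) (\<phi> x) \<longleftrightarrow> alg_le p x"
proof
  assume p: "p \<in> I" and x: "x \<in> I" and l: "alg_le (\<phi> p) (\<phi> x)"
  then obtain z where z: "\<phi> x = \<phi> p + z" unfolding alg_le_def by blast
  then have zI: "z \<in> I'" using down'[of z "\<phi> x"] phiI[OF x] by simp
  have "\<phi> x = \<phi> (p + \<psi> z)" using z phi_add[OF p psiI[OF zI]] phipsi[OF zI] by simp
  then have "x = p + \<psi> z" using phi_inj x addI[OF p psiI[OF zI]] by blast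
  then show "alg_le p x" by simp
next
  assume p: "p \<in> I" and x: "x \<in> I" and l: "alg_le p x"
  then obtain z where z: "x = p + z" unfolding alg_le_def by blast
  then have "z \<in> I" using down[of z x] x by simp
  then show "alg_le (\<phi> p) (\<phi> x)" using z phi_add p by simp
qed

lemma mulI: "q \<in> I \<Longrightarrow> mul n q \<in> I"
  by (induction n) (auto intro: addI)
lemma phi_mul: "q \<in> I \<Longrightarrow> \<phi> (mul n q) = mul n (\<phi> q)"
  by (induction n) (auto simp: phi_add mulI)

lemma phi_prime: assumes pp: "is_prime_elem p" and pI: "p \<in> I" shows "is_prime_elem (\<phi> p)"
  unfolding is_prime_elem_def
proof (intro conjI allI impI)
  show "\<not> alg_le (\<phi> p) 0"
  proof
    assume "alg_le (\<phi> p) 0"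
    then have "\<phi> p = \<phi> 0" using antisym by simp
    then have "p = 0" using phi_inj[OF pI zI] by blast
    then show False using prime_ne0 pp by simp
  qed
next
  fix a b assume "alg_le (\<phi> p) (a + b)"
  from le_split[OF this] obtain x1 x2 where x: "\<phi> p = x1 + x2" "alg_le x1 a" "alg_le x2 b" by blast
  have xI: "x1 \<in> I'" "x2 \<in> I'" using x(1) phiI[OF pI] down'[of x1 "\<phi> p"] down'[of x2 "\<phi> p"] by auto
  have "\<phi> p = \<phi> (\<psi> x1 + \<psi> x2)" using x(1) phi_add psiI xI phipsi by simp
  then have "p = \<psi> x1 + \<psi> x2" using phi_inj pI addI psiI xI by blast
  then have "alg_le p (\<psi> x1) \<or> alg_le p (\<psi> x2)" using prime_le_add[OF pp] by simp
  then have "alg_le (\<phi> p) x1 \<or> alg_le (\<phi> p) x2"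
    using phi_le[OF pI psiI[OF xI(1)]] phi_le[OF pI psiI[OF xI(2)]] phipsi xI by simp
  then show "alg_le (\<phi> p) a \<or> alg_le (\<phi> p) b" using x alg_le_trans by blast
qed

lemma phi_free: "p \<in> I \<Longrightarrow> free_prime p \<Longrightarrow> free_prime (\<phi> p)"
  unfolding free_prime_def using addI[of p p] phi_add[of p p] phi_inj[of "p + p" p] by auto

lemma hom: "monoid_hom \<pi>" and surj: "surj \<pi>"
  and ker: "\<pi> x = \<pi> y \<longleftrightarrow> (x, y) \<in> crown_cong I \<phi>"
  using cp unfolding crowned_pushout_def by auto
lemma pi_add[simp]: "\<pi> (x + y) = \<pi> x + \<pi> y" and pi0[simp]: "\<pi> 0 = 0"
  using hom unfolding monoid_hom_def by auto
lemma pi_phi: "x \<in> I \<Longrightarrow> \<pi> (\<phi> x) = \<pi> x"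
  using ker crown_cong.gen[of x I \<phi>] crown_cong.sym by blast
lemma pi_psi: "y \<in> I' \<Longrightarrow> \<pi> (\<psi> y) = \<pi> y"
  using pi_phi[OF psiI] phipsi by simp


lemma surjE: obtains x where "\<alpha> = \<pi> x"
  using surj by (metis surj_def)

lemma phi_prime_ne: "p \<in> I \<Longrightarrow> is_prime_elem p \<Longrightarrow> \<not> alg_le (\<phi> p) 0"
  using phi_prime unfolding is_prime_elem_def by blast

definition H where "H p a \<longleftrightarrow> alg_le p a \<or> (p \<in> I \<and> alg_le (\<phi> p) a)"

lemma H_add: "is_prime_elem p \<Longrightarrow> H p (a + b) \<longleftrightarrow> H p a \<or> H p b"
proof -
  assume pp: "is_prime_elem p"
  have "alg_le p (a + b) \<longleftrightarrow> alg_le p a \<or> alg_le p b"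
    using prime_le_add[OF pp] alg_le_trans alg_le_addR alg_le_addL by blast
  moreover have "p \<in> I \<Longrightarrow> alg_le (\<phi> p) (a + b) \<longleftrightarrow> alg_le (\<phi> p) a \<or> alg_le (\<phi> p) b"
    using prime_le_add[OF phi_prime[OF pp]] alg_le_trans alg_le_addR alg_le_addL by blast
  ultimately show ?thesis unfolding H_def by blast
qed

lemma H_gen: assumes pp: "is_prime_elem p" and pI': "p \<notin> I'" and x: "x \<in> I"
  shows "H p x \<longleftrightarrow> H p (\<phi> x)"
proof -
  have "\<not> (p \<in> I \<and> alg_le (\<phi> p) x)"
  proof
    assume h: "p \<in> I \<and> alg_le (\<phi> p) x"
    then have "\<phi> p \<in> I" using down x by blast
    then have "\<phi> p = 0" using both0 phiI h by blast
    then show False using phi_prime_ne[of p] h pp by simp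
  qed
  then have 1: "H p x \<longleftrightarrow> alg_le p x" unfolding H_def by blast
  have "\<not> alg_le p (\<phi> x)" using down' phiI[OF x] pI' by blast
  then have "H p (\<phi> x) \<longleftrightarrow> p \<in> I \<and> alg_le p x" unfolding H_def using phi_le x by blast
  then show ?thesis using 1 down x by blast
qed

lemma H_cong: assumes pp: "is_prime_elem p" and pI': "p \<notin> I'"
  shows "(a, b) \<in> crown_cong I \<phi> \<Longrightarrow> H p a \<longleftrightarrow> H p b"
proof (induction rule: crown_cong.induct)
  case (gen x) then show ?case using H_gen[OF pp pI'] by blast
next
  case (add x y z) then show ?case using H_add[OF pp] by blast
qed auto

lemma pi_le_H: assumes pp: "is_prime_elem p" and pI': "p \<notin> I'"
  shows "alg_le (\<pi> p) (\<pi> a) \<longleftrightarrow> H p a"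
proof
  assume "alg_le (\<pi> p) (\<pi> a)"
  then obtain \<gamma> where g: "\<pi> a = \<pi> p + \<gamma>" unfolding alg_le_def by blast
  obtain c where "\<gamma> = \<pi> c" using surjE by blast
  then have "\<pi> a = \<pi> (p + c)" using g by simp
  then have "(a, p + c) \<in> crown_cong I \<phi>" using ker by blast
  moreover have "H p (p + c)" unfolding H_def by simp
  ultimately show "H p a" using H_cong[OF pp pI'] by blast
next
  assume "H p a"
  then show "alg_le (\<pi> p) (\<pi> a)" unfolding H_def
    using alg_le_hom[OF hom] pi_phi by metis
qed

lemma pi_prime: assumes pp: "is_prime_elem p" and pI': "p \<notin> I'"
  shows "is_prime_elem (\<pi> p)"
  unfolding is_prime_elem_def
proof (intro conjI allI impI)
  have "\<not> H p 0" unfolding H_def using pp phi_prime_ne unfolding is_prime_elem_def by blast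
  then show "\<not> alg_le (\<pi> p) 0" using pi_le_H[OF pp pI', of 0] by simp
next
  fix \<alpha> \<beta> assume l: "alg_le (\<pi> p) (\<alpha> + \<beta>)"
  obtain a where a: "\<alpha> = \<pi> a" using surjE by blast
  obtain b where b: "\<beta> = \<pi> b" using surjE by blast
  have "H p (a + b)" using l a b pi_le_H[OF pp pI', of "a + b"] by simp
  then have "H p a \<or> H p b" using H_add[OF pp] by blast
  then show "alg_le (\<pi> p) \<alpha> \<or> alg_le (\<pi> p) \<beta>" using pi_le_H[OF pp pI'] a b by blast
qed

definition q2 where "q2 p = (if p \<in> I then \<phi> p else p)"

lemma Pn_zero: "\<not> alg_le q c \<Longrightarrow> \<not> alg_le q' c \<Longrightarrow> Pn q q' n c \<longleftrightarrow> n = 0"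
proof
  assume nc: "\<not> alg_le q c" "\<not> alg_le q' c" and "Pn q q' n c"
  then obtain i j where ij: "i + j = n" "alg_le (mul i q + mul j q') c" unfolding Pn_def by auto
  have "i = 0" using ij(2) nc(1) le_mul_prime[of i q c] by (metis alg_le_addR alg_le_trans gr0I)
  moreover have "j = 0" using ij(2) nc(2) le_mul_prime[of j q' c] by (metis alg_le_addL alg_le_trans gr0I)
  ultimately show "n = 0" using ij by simp
qed simp

lemma P_gen: assumes pp: "is_prime_elem p" and pI': "p \<notin> I'" and x: "x \<in> I"
  shows "Pn p (q2 p) n x \<longleftrightarrow> Pn p (q2 p) n (\<phi> x)"
proof (cases "p \<in> I")
  case False
  then have "\<not> alg_le p x" using down x by blast
  moreover have "\<not> alg_le p (\<phi> x)" using down' phiI[OF x] pI' by blast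
  ultimately show ?thesis using Pn_zero False unfolding q2_def by simp
next
  case True
  then have q: "q2 p = \<phi> p" unfolding q2_def by simp
  have nphi: "\<not> alg_le (\<phi> p) x"
  proof
    assume "alg_le (\<phi> p) x"
    then have "\<phi> p \<in> I" using down x by blast
    then have "\<phi> p = 0" using both0 phiI True by blast
    then show False using phi_prime_ne[of p] True pp by simp
  qed
  have np: "\<not> alg_le p (\<phi> x)" using down' phiI[OF x] pI' by blast
  show ?thesis unfolding q
  proof
    assume "Pn p (\<phi> p) n x"
    then obtain i j where ij: "i + j = n" "alg_le (mul i p + mul j (\<phi> p)) x" unfolding Pn_def by auto
    have "j = 0" using ij(2) nphi le_mul_prime[of j "\<phi> p" x] by (metis alg_le_addL alg_le_trans gr0I)
    then have "alg_le (mul i p) x" using ij by simp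
    then have "alg_le (mul i (\<phi> p)) (\<phi> x)" using phi_le[OF mulI[OF True] x] phi_mul[OF True] by simp
    then show "Pn p (\<phi> p) n (\<phi> x)" unfolding Pn_def using ij \<open>j = 0\<close>
      by (intro exI[of _ 0] exI[of _ i]) simp
  next
    assume "Pn p (\<phi> p) n (\<phi> x)"
    then obtain i j where ij: "i + j = n" "alg_le (mul i p + mul j (\<phi> p)) (\<phi> x)" unfolding Pn_def by auto
    have "i = 0" using ij(2) np le_mul_prime[of i p "\<phi> x"] by (metis alg_le_addR alg_le_trans gr0I)
    then have "alg_le (mul j (\<phi> p)) (\<phi> x)" using ij by simp
    then have "alg_le (mul j p) x" using phi_le[OF mulI[OF True] x] phi_mul[OF True] by simp
    then show "Pn p (\<phi> p) n x" unfolding Pn_def using ij \<open>i = 0\<close>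
      by (intro exI[of _ j] exI[of _ 0]) simp
  qed
qed

lemma q2_prime: "is_prime_elem p \<Longrightarrow> is_prime_elem (q2 p)"
  unfolding q2_def using phi_prime by auto

lemma P_cong: assumes pp: "is_prime_elem p" and pI': "p \<notin> I'"
  shows "(a, b) \<in> crown_cong I \<phi> \<Longrightarrow> (\<forall>n. Pn p (q2 p) n a \<longleftrightarrow> Pn p (q2 p) n b)"
proof (induction rule: crown_cong.induct)
  case (gen x) then show ?case using P_gen[OF pp pI'] by blast
next
  case (add x y z) then show ?case using Pn_add[OF pp q2_prime[OF pp]] by presburger
qed auto


lemma prime_from_phi: assumes a: "a \<in> I" and pa: "is_prime_elem (\<phi> a)" shows "is_prime_elem a"
  unfolding is_prime_elem_def
proof (intro conjI allI impI)
  show "\<not> alg_le a 0"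
  proof
    assume "alg_le a 0" then have "a = 0" using antisym by simp
    then show False using pa prime_ne0[of 0] by simp
  qed
next
  fix b c assume "alg_le a (b + c)"
  from le_split[OF this] obtain a1 a2 where x: "a = a1 + a2" "alg_le a1 b" "alg_le a2 c" by blast
  have aI: "a1 \<in> I" "a2 \<in> I" using x(1) a down[of a1 a] down[of a2 a] by auto
  have "\<phi> a = \<phi> a1 + \<phi> a2" using x(1) phi_add aI by simp
  then have "alg_le (\<phi> a) (\<phi> a1) \<or> alg_le (\<phi> a) (\<phi> a2)" using prime_le_add[OF pa] by simp
  then have "alg_le a a1 \<or> alg_le a a2" using phi_le[OF a] aI by blast
  then show "alg_le a b \<or> alg_le a c" using x alg_le_trans by blast
qed

lemma psi_prime: "p \<in> I' \<Longrightarrow> is_prime_elem p \<Longrightarrow> is_prime_elem (\<psi> p)"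
  using prime_from_phi[OF psiI] phipsi by simp

lemma psi_notI': "p \<in> I' \<Longrightarrow> is_prime_elem p \<Longrightarrow> \<psi> p \<notin> I'"
  using prime_notboth[OF psi_prime psiI] by blast

lemma q2_inc: assumes pp: "is_prime_elem p" and pI': "p \<notin> I'"
  shows "q2 p = p \<or> (\<not> alg_le p (q2 p) \<and> \<not> alg_le (q2 p) p)"
proof (cases "p \<in> I")
  case True
  have "\<not> alg_le p (\<phi> p)" using down' phiI[OF True] pI' by blast
  moreover have "\<not> alg_le (\<phi> p) p"
  proof
    assume "alg_le (\<phi> p) p"
    then have "\<phi> p \<in> I" using down True by blast
    then have "\<phi> p = 0" using both0 phiI True by blast
    then show False using phi_prime_ne[of p] True pp by simp
  qed
  ultimately show ?thesis unfolding q2_def using True by simp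
qed (simp add: q2_def)

lemma K1a: assumes pp: "is_prime_elem p" and pI': "p \<notin> I'" and h: "\<pi> (x + p + s) = \<pi> x"
  shows "\<pi> (x + p) = \<pi> x"
proof (cases "free_prime p")
  case False
  then have pp2: "p + p = p" unfolding free_prime_def by simp
  have "\<pi> (x + p) = \<pi> (x + p + s) + \<pi> p" using h by simp
  also have "\<dots> = \<pi> (x + s + (p + p))" by (simp add: add_ac)
  also have "\<dots> = \<pi> (x + p + s)" using pp2 by (simp add: add_ac)
  finally show ?thesis using h by simp
next
  case True
  let ?q = "q2 p"
  have pq: "is_prime_elem ?q" using q2_prime[OF pp] .
  have fq: "free_prime ?q" using True phi_free unfolding q2_def by simp
  have inc: "?q = p \<or> (\<not> alg_le p ?q \<and> \<not> alg_le ?q p)" using q2_inc[OF pp pI'] .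
  have cong: "(x + p + s, x) \<in> crown_cong I \<phi>" using h ker by blast
  have p1: "Pn p ?q (Suc 0) (p + s)" unfolding Pn_def
    by (intro exI[of _ "Suc 0"] exI[of _ 0]) simp
  have all: "\<forall>n. Pn p ?q n x"
  proof
    fix n show "Pn p ?q n x"
    proof (induction n)
      case 0 show ?case by simp
    next
      case (Suc n)
      have "Pn p ?q (n + Suc 0) (x + (p + s))" using Pn_add[OF pp pq] Suc p1 by blast
      then have "Pn p ?q (Suc n) (x + p + s)" by (simp add: add.assoc)
      then show ?case using P_cong[OF pp pI' cong] by blast
    qed
  qed
  from FindAbove[OF pp pq True fq inc all] obtain r where
    r: "is_prime_elem r" "alg_le r x" "alg_less p r \<or> alg_less ?q r" by blast
  obtain z where z: "x = r + z" using r(2) unfolding alg_le_def by blast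
  have piq: "\<pi> ?q = \<pi> p" unfolding q2_def using pi_phi by simp
  from r(3) show ?thesis
  proof
    assume "alg_less p r"
    then have "p + r = r" using lemA pp r(1) by blast
    then have "x + p = x" using z by (metis add.assoc add.commute)
    then show ?thesis by simp
  next
    assume "alg_less ?q r"
    then have "?q + r = r" using lemA pq r(1) by blast
    then have "x + ?q = x" using z by (metis add.assoc add.commute)
    then have "\<pi> x + \<pi> ?q = \<pi> x" by (metis pi_add)
    then show ?thesis using piq by simp
  qed
qed

lemma K1: assumes pp: "is_prime_elem p" and h: "\<pi> (x + p + s) = \<pi> x"
  shows "\<pi> (x + p) = \<pi> x"
proof (cases "p \<in> I'")
  case False then show ?thesis using K1a pp h by blast
next
  case True
  have e: "\<pi> (\<psi> p) = \<pi> p" using pi_psi[OF True] .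
  have "\<pi> (x + \<psi> p + s) = \<pi> x" using h e by simp
  then have "\<pi> (x + \<psi> p) = \<pi> x" using K1a[OF psi_prime[OF True pp] psi_notI'[OF True pp]] by blast
  then show ?thesis using e by simp
qed

lemma absorb_list: "(\<forall>r\<in>set rs. X + \<pi> r = X) \<Longrightarrow> X + \<pi> (sum_list rs) = X"
  by (induction rs) (auto simp: add.assoc[symmetric])

lemma Q_antisym: "alg_le (\<alpha>::'b) \<beta> \<Longrightarrow> alg_le \<beta> \<alpha> \<Longrightarrow> \<alpha> = \<beta>"
proof -
  assume "alg_le \<alpha> \<beta>" "alg_le \<beta> \<alpha>"
  then obtain \<gamma> \<delta> where g: "\<beta> = \<alpha> + \<gamma>" "\<alpha> = \<beta> + \<delta>" unfolding alg_le_def by blast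
  obtain x where x: "\<alpha> = \<pi> x" using surjE by blast
  obtain u where u: "\<gamma> = \<pi> u" using surjE by blast
  obtain v where v: "\<delta> = \<pi> v" using surjE by blast
  obtain rs where rs: "set rs \<subseteq> primes_of" "u = sum_list rs" using gen by blast
  have "\<alpha> = \<alpha> + \<gamma> + \<delta>" using g by simp
  then have tot: "\<pi> (x + u + v) = \<pi> x" using x u v by simp
  have "\<forall>r\<in>set rs. \<pi> x + \<pi> r = \<pi> x"
  proof
    fix r assume r: "r \<in> set rs"
    then have "alg_le r u" using rs sum_list_le by simp
    then obtain u' where "u = r + u'" unfolding alg_le_def by blast
    then have "\<pi> (x + r + (u' + v)) = \<pi> x" using tot by (simp add: add_ac)
    moreover have "is_prime_elem r" using r rs primes_of_def by auto
    ultimately have "\<pi> (x + r) = \<pi> x" using K1 by blast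
    then show "\<pi> x + \<pi> r = \<pi> x" by simp
  qed
  then have "\<pi> x + \<pi> u = \<pi> x" using absorb_list rs by simp
  then show ?thesis using g x u by simp
qed

end

context crown begin

lemma refine23: "(a1::'a) + a2 = b1 + b2 + b3 \<Longrightarrow> \<exists>c11 c12 c13 c21 c22 c23.
   a1 = c11 + c12 + c13 \<and> a2 = c21 + c22 + c23 \<and> b1 = c11 + c21 \<and> b2 = c12 + c22 \<and> b3 = c13 + c23"
proof -
  assume "a1 + a2 = b1 + b2 + b3"
  then have "a1 + a2 = b1 + (b2 + b3)" by (simp add: add.assoc)
  from refine[OF this] obtain d11 d12 d21 d22 where
    d: "a1 = d11 + d12" "a2 = d21 + d22" "b1 = d11 + d21" "b2 + b3 = d12 + d22" by blast
  from refine[OF d(4)[symmetric]] obtain e11 e12 e21 e22 where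
    e: "d12 = e11 + e12" "d22 = e21 + e22" "b2 = e11 + e21" "b3 = e12 + e22" by blast
  have "a1 = d11 + e11 + e12" "a2 = d21 + e21 + e22" using d(1,2) e(1,2) by (simp_all add: add.assoc)
  then show ?thesis using d(3) e(3,4) by blast
qed

lemma refine33: "(a1::'a) + a2 + a3 = b1 + b2 + b3 \<Longrightarrow> \<exists>z11 z12 z13 z21 z22 z23 z31 z32 z33.
   a1 = z11 + z12 + z13 \<and> a2 = z21 + z22 + z23 \<and> a3 = z31 + z32 + z33 \<and>
   b1 = z11 + z21 + z31 \<and> b2 = z12 + z22 + z32 \<and> b3 = z13 + z23 + z33"
proof -
  assume "a1 + a2 + a3 = b1 + b2 + b3"
  then have "a1 + (a2 + a3) = b1 + b2 + b3" by (simp add: add.assoc)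
  from refine23[OF this] obtain c11 c12 c13 c21 c22 c23 where
    c: "a1 = c11 + c12 + c13" "a2 + a3 = c21 + c22 + c23" "b1 = c11 + c21" "b2 = c12 + c22" "b3 = c13 + c23" by blast
  from refine23[OF c(2)] obtain f11 f12 f13 f21 f22 f23 where
    f: "a2 = f11 + f12 + f13" "a3 = f21 + f22 + f23" "c21 = f11 + f21" "c22 = f12 + f22" "c23 = f13 + f23" by blast
  have "b1 = c11 + f11 + f21" "b2 = c12 + f12 + f22" "b3 = c13 + f13 + f23"
    using c(3,4,5) f(3,4,5) by (simp_all add: add.assoc)
  then show ?thesis using c(1) f(1,2) by blast
qed

lemma S_char: "(x, y) \<in> crown_cong I \<phi> \<Longrightarrow>
  \<exists>w A B. A \<in> I \<and> B \<in> I \<and> x = w + A + \<phi> B \<and> y = w + \<phi> A + B"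
proof (induction rule: crown_cong.induct)
  case (gen x)
  then show ?case by (intro exI[of _ 0] exI[of _ x] exI[of _ 0]) simp
next
  case (refl x)
  then show ?case by (intro exI[of _ x] exI[of _ 0] exI[of _ 0]) simp
next
  case (sym x y)
  then obtain w A B where "A \<in> I" "B \<in> I" "x = w + A + \<phi> B" "y = w + \<phi> A + B" by blast
  then show ?case by (intro exI[of _ w] exI[of _ B] exI[of _ A]) (simp add: add_ac)
next
  case (add x y z)
  then obtain w A B where "A \<in> I" "B \<in> I" "x = w + A + \<phi> B" "y = w + \<phi> A + B" by blast
  then show ?case by (intro exI[of _ "w + z"] exI[of _ A] exI[of _ B]) (simp add: add_ac)
next
  case (trans x y z)
  from trans.IH(1) obtain w A B where h1: "A \<in> I" "B \<in> I" "x = w + A + \<phi> B" "y = w + \<phi> A + B" by blast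
  from trans.IH(2) obtain w' A' B' where h2: "A' \<in> I" "B' \<in> I" "y = w' + A' + \<phi> B'" "z = w' + \<phi> A' + B'" by blast
  have "w + \<phi> A + B = w' + A' + \<phi> B'" using h1 h2 by simp
  from refine33[OF this] obtain z11 z12 z13 z21 z22 z23 z31 z32 z33 where
    r: "w = z11 + z12 + z13" "\<phi> A = z21 + z22 + z23" "B = z31 + z32 + z33"
      "w' = z11 + z21 + z31" "A' = z12 + z22 + z32" "\<phi> B' = z13 + z23 + z33" by blast
  have fA: "\<phi> A \<in> I'" "\<phi> B' \<in> I'" using phiI h1 h2 by auto
  have m2: "z21 \<in> I'" "z22 \<in> I'" "z23 \<in> I'"
    using fA(1) unfolding r(2) by (simp_all only: sumI')
  have m3: "z31 \<in> I" "z32 \<in> I" "z33 \<in> I"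
    using h1(2) unfolding r(3) by (simp_all only: sumI)
  have mA: "z12 \<in> I" "z22 \<in> I" "z32 \<in> I"
    using h2(1) unfolding r(5) by (simp_all only: sumI)
  have mB: "z13 \<in> I'" "z23 \<in> I'" "z33 \<in> I'"
    using fA(2) unfolding r(6) by (simp_all only: sumI')
  have z22: "z22 = 0" using both0 mA(2) m2(2) by blast
  have z33: "z33 = 0" using both0 m3(3) mB(3) by blast
  have Aeq: "A = \<psi> z21 + \<psi> z23"
  proof -
    have "A = \<psi> (\<phi> A)" using psiphi h1(1) by simp
    also have "\<dots> = \<psi> (z21 + z23)" using r(2) z22 by simp
    also have "\<dots> = \<psi> z21 + \<psi> z23" using psi_add m2 by simp
    finally show ?thesis .
  qed
  have Beq: "B' = \<psi> z13 + \<psi> z23"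
  proof -
    have "B' = \<psi> (\<phi> B')" using psiphi h2(2) by simp
    also have "\<dots> = \<psi> (z13 + z23)" using r(6) z33 by simp
    also have "\<dots> = \<psi> z13 + \<psi> z23" using psi_add mB by simp
    finally show ?thesis .
  qed
  have phiB: "\<phi> B = \<phi> z31 + \<phi> z32" using r(3) z33 phi_add m3 by simp
  have phiA': "\<phi> A' = \<phi> z12 + \<phi> z32" using r(5) z22 phi_add mA by simp
  define W where "W = z11 + \<psi> z23 + \<phi> z32"
  define A2 where "A2 = z12 + \<psi> z21"
  define B2 where "B2 = \<psi> z13 + z31"
  have A2I: "A2 \<in> I" unfolding A2_def using addI mA psiI m2 by simp
  have B2I: "B2 \<in> I" unfolding B2_def using addI m3 psiI mB by simp
  have phiA2: "\<phi> A2 = \<phi> z12 + z21" unfolding A2_def using phi_add mA psiI m2 phipsi by simp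
  have phiB2: "\<phi> B2 = z13 + \<phi> z31" unfolding B2_def using phi_add m3 psiI mB phipsi by simp
  have "x = z11 + z12 + z13 + (\<psi> z21 + \<psi> z23) + (\<phi> z31 + \<phi> z32)"
    using h1(3) r(1) Aeq phiB by simp
  also have "\<dots> = (z11 + \<psi> z23 + \<phi> z32) + (z12 + \<psi> z21) + (z13 + \<phi> z31)"
    by (simp only: ac_simps)
  finally have "x = W + A2 + \<phi> B2" unfolding W_def A2_def phiB2 .
  have "z = z11 + z21 + z31 + (\<phi> z12 + \<phi> z32) + (\<psi> z13 + \<psi> z23)"
    using h2(4) r(4) Beq phiA' by simp
  also have "\<dots> = (z11 + \<psi> z23 + \<phi> z32) + (\<phi> z12 + z21) + (\<psi> z13 + z31)"
    by (simp only: ac_simps)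
  finally have "z = W + \<phi> A2 + B2" unfolding W_def B2_def phiA2 .
  moreover note \<open>x = W + A2 + \<phi> B2\<close>
  ultimately show ?case using A2I B2I by blast
qed

lemma SW: assumes e: "a + b = s + \<phi> t" and t: "t \<in> I"
  shows "\<exists>a' b'. \<pi> a' = \<pi> a \<and> \<pi> b' = \<pi> b \<and> a' + b' = s + t"
proof -
  from refine[OF e] obtain z11 z12 z21 z22 where
    z: "a = z11 + z12" "b = z21 + z22" "s = z11 + z21" "\<phi> t = z12 + z22" by blast
  have zI: "z12 \<in> I'" "z22 \<in> I'" using phiI[OF t] unfolding z(4) by (simp_all only: sumI')
  have "\<psi> z12 + \<psi> z22 = t" using psi_add[OF zI] z(4)[symmetric] psiphi[OF t] by simp
  then have "(z11 + \<psi> z12) + (z21 + \<psi> z22) = s + t" using z(3) by (simp add: add_ac)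
  moreover have "\<pi> (z11 + \<psi> z12) = \<pi> a" "\<pi> (z21 + \<psi> z22) = \<pi> b" using z pi_psi zI by simp_all
  ultimately show ?thesis by blast
qed

lemma Q_refine: "refinement_monoid TYPE('b)"
  unfolding refinement_monoid_def
proof (intro allI impI)
  fix \<alpha> \<beta> \<gamma> \<delta> :: 'b assume h: "\<alpha> + \<beta> = \<gamma> + \<delta>"
  obtain a where a: "\<alpha> = \<pi> a" using surjE by blast
  obtain b where b: "\<beta> = \<pi> b" using surjE by blast
  obtain c where c: "\<gamma> = \<pi> c" using surjE by blast
  obtain d where d: "\<delta> = \<pi> d" using surjE by blast
  have "\<pi> (a + b) = \<pi> (c + d)" using h a b c d by simp
  then have "(a + b, c + d) \<in> crown_cong I \<phi>" using ker by blast
  from S_char[OF this] obtain w A B where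
    s: "A \<in> I" "B \<in> I" "a + b = w + A + \<phi> B" "c + d = w + \<phi> A + B" by blast
  from SW[OF s(3) s(2)] obtain a' b' where ab: "\<pi> a' = \<pi> a" "\<pi> b' = \<pi> b" "a' + b' = w + A + B" by blast
  have "c + d = (w + B) + \<phi> A" using s(4) by (simp add: add_ac)
  from SW[OF this s(1)] obtain c' d' where cd: "\<pi> c' = \<pi> c" "\<pi> d' = \<pi> d" "c' + d' = w + B + A" by blast
  have "a' + b' = c' + d'" using ab cd by (simp add: add_ac)
  from refine[OF this] obtain z11 z12 z21 z22 where
    z: "a' = z11 + z12" "b' = z21 + z22" "c' = z11 + z21" "d' = z12 + z22" by blast
  show "\<exists>z11 z12 z21 z22. \<alpha> = z11 + z12 \<and> \<beta> = z21 + z22 \<and> \<gamma> = z11 + z21 \<and> \<delta> = z12 + z22"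
  proof (intro exI conjI)
    show "\<alpha> = \<pi> z11 + \<pi> z12" using a ab(1) z(1) by simp
    show "\<beta> = \<pi> z21 + \<pi> z22" using b ab(2) z(2) by simp
    show "\<gamma> = \<pi> z11 + \<pi> z21" using c cd(1) z(3) by simp
    show "\<delta> = \<pi> z12 + \<pi> z22" using d cd(2) z(4) by simp
  qed
qed


definition adj where "adj r = (if r \<in> I' then \<psi> r else r)"

lemma adj_prime: "is_prime_elem r \<Longrightarrow> is_prime_elem (adj r) \<and> adj r \<notin> I'"
  unfolding adj_def using psi_prime psi_notI' by auto

lemma pi_adj: "\<pi> (adj r) = \<pi> r"
  unfolding adj_def using pi_psi by simp

lemma Q_pg: "primely_generated TYPE('b)"
  unfolding primely_generated_def
proof
  fix \<alpha> :: 'b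
  obtain x where x: "\<alpha> = \<pi> x" using surjE by blast
  obtain rs where rs: "set rs \<subseteq> primes_of" "x = sum_list rs" using gen by blast
  have "\<alpha> = sum_list (map \<pi> rs)" using x rs hom_sum_list[OF hom] by simp
  also have "map \<pi> rs = map (\<lambda>r. \<pi> (adj r)) rs" using pi_adj by simp
  finally have 1: "\<alpha> = sum_list (map (\<lambda>r. \<pi> (adj r)) rs)" .
  have "set (map (\<lambda>r. \<pi> (adj r)) rs) \<subseteq> primes_of"
    using rs(1) adj_prime pi_prime unfolding primes_of_def by auto
  then show "\<exists>xs. set xs \<subseteq> primes_of \<and> \<alpha> = sum_list xs" using 1 by blast
qed

lemma pi_inj_primes: "inj_on \<pi> (primes_of - I')"
proof (rule inj_onI)
  fix p q assume p: "p \<in> primes_of - I'" and q: "q \<in> primes_of - I'" and e: "\<pi> p = \<pi> q"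
  have pp: "is_prime_elem p" "p \<notin> I'" and pq: "is_prime_elem q" "q \<notin> I'" using p q unfolding primes_of_def by auto
  have hpq: "H p q" using pi_le_H[OF pp, of q] e by simp
  have hqp: "H q p" using pi_le_H[OF pq, of p] e by simp
  have noI: "\<not> alg_le (\<phi> a) b" if a: "is_prime_elem a" "a \<in> I" and b: "b \<in> I" for a b
  proof
    assume "alg_le (\<phi> a) b"
    then have "\<phi> a \<in> I" using down b by blast
    then have "\<phi> a = 0" using both0 phiI a by blast
    then show False using phi_prime_ne[of a] a by simp
  qed
  show "p = q"
  proof (cases "p \<in> I")
    case pI: True
    show ?thesis
    proof (cases "q \<in> I")
      case True
      then have "alg_le p q" "alg_le q p" using hpq hqp noI pI pp pq unfolding H_def by blast+
      then show ?thesis using antisym by blast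
    next
      case False
      have "alg_le q p" using hqp False unfolding H_def by blast
      then show ?thesis using down pI False by blast
    qed
  next
    case pnI: False
    then have "alg_le p q" using hpq unfolding H_def by blast
    show ?thesis
    proof (cases "q \<in> I")
      case True
      then show ?thesis using down pnI \<open>alg_le p q\<close> by blast
    next
      case False
      then have "alg_le q p" using hqp unfolding H_def by blast
      then show ?thesis using antisym \<open>alg_le p q\<close> by blast
    qed
  qed
qed

lemma pi_primes_onto: "\<pi> ` (primes_of - I') = (primes_of :: 'b set)"
proof
  show "\<pi> ` (primes_of - I') \<subseteq> primes_of" using pi_prime unfolding primes_of_def by auto
next
  show "primes_of \<subseteq> \<pi> ` (primes_of - I')"
  proof
    fix \<rho> :: 'b assume "\<rho> \<in> primes_of"
    then have pr: "is_prime_elem \<rho>" unfolding primes_of_def by simp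
    obtain x where x: "\<rho> = \<pi> x" using surjE by blast
    obtain rs where rs: "set rs \<subseteq> primes_of" "x = sum_list rs" using gen by blast
    have s: "\<rho> = sum_list (map \<pi> rs)" using x rs hom_sum_list[OF hom] by simp
    then have "alg_le \<rho> (sum_list (map \<pi> rs))" by simp
    from prime_le_sum_list[OF pr this] obtain \<beta> where b: "\<beta> \<in> set (map \<pi> rs)" "alg_le \<rho> \<beta>" by blast
    then obtain r where r: "r \<in> set rs" "\<beta> = \<pi> r" by auto
    have "alg_le \<beta> \<rho>" using s sum_list_le[OF b(1)] by simp
    then have "\<rho> = \<pi> r" using Q_antisym b(2) r(2) by blast
    then have "\<rho> = \<pi> (adj r)" using pi_adj by simp
    moreover have "adj r \<in> primes_of - I'" using adj_prime r rs unfolding primes_of_def by auto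
    ultimately show "\<rho> \<in> \<pi> ` (primes_of - I')" by blast
  qed
qed

lemma pi_bij: "bij_betw \<pi> (primes_of - I') (primes_of :: 'b set)"
  unfolding bij_betw_def using pi_inj_primes pi_primes_onto by blast

definition R where "R = ({(p, q). p \<in> primes_of - I' \<and> q \<in> primes_of - I' \<and> alg_le p q}
                   \<union> {(p, q). p \<in> primes_of \<inter> I \<and> q \<in> primes_of - (I \<union> I') \<and> alg_less (\<phi> p) q})"

lemma R_le: "(a, b) \<in> R \<Longrightarrow> alg_le (\<pi> a) (\<pi> b)"
  unfolding R_def alg_less_def using alg_le_hom[OF hom] pi_phi by (metis (lifting) IntD2 Un_iff case_prodD mem_Collect_eq)

lemma Rs_le: "(a, b) \<in> R\<^sup>* \<Longrightarrow> alg_le (\<pi> a) (\<pi> b)"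
proof (induction rule: rtrancl_induct)
  case base then show ?case by simp
next
  case (step y z) then show ?case using R_le alg_le_trans by blast
qed

lemma order_char: assumes p: "p \<in> primes_of - I'" and q: "q \<in> primes_of - I'"
  shows "alg_le (\<pi> p) (\<pi> q) \<longleftrightarrow> (p, q) \<in> R\<^sup>*"
proof
  assume "alg_le (\<pi> p) (\<pi> q)"
  then have h: "H p q" using pi_le_H p unfolding primes_of_def by blast
  show "(p, q) \<in> R\<^sup>*"
  proof (cases "alg_le p q")
    case True
    then have "(p, q) \<in> R" using p q unfolding R_def by blast
    then show ?thesis by blast
  next
    case False
    then have pI: "p \<in> I" and l: "alg_le (\<phi> p) q" using h unfolding H_def by blast+
    have pp: "is_prime_elem p" using p unfolding primes_of_def by simp
    have "\<phi> p \<noteq> q" using phiI[OF pI] q by blast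
    then have "alg_less (\<phi> p) q" using l unfolding alg_less_def by simp
    moreover have "q \<notin> I"
    proof
      assume "q \<in> I"
      then have "\<phi> p \<in> I" using down l by blast
      then have "\<phi> p = 0" using both0 phiI pI by blast
      then show False using phi_prime_ne[of p] pI pp by simp
    qed
    ultimately have "(p, q) \<in> R" using p q pI unfolding R_def by blast
    then show ?thesis by blast
  qed
next
  assume "(p, q) \<in> R\<^sup>*"
  then show "alg_le (\<pi> p) (\<pi> q)" using Rs_le by blast
qed

lemma free_char: assumes p: "p \<in> primes_of - I'"
  shows "free_prime (\<pi> p) \<longleftrightarrow> free_prime p"
proof
  assume "free_prime (\<pi> p)"
  then show "free_prime p" unfolding free_prime_def by (metis pi_add)
next
  assume fp: "free_prime p"
  have pp: "is_prime_elem p" and pI': "p \<notin> I'" using p unfolding primes_of_def by auto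
  show "free_prime (\<pi> p)"
  proof (rule ccontr)
    assume "\<not> free_prime (\<pi> p)"
    then have "\<pi> (p + p) = \<pi> p" unfolding free_prime_def by simp
    then have cong: "(p + p, p) \<in> crown_cong I \<phi>" using ker by blast
    have "Pn p (q2 p) 2 (p + p)" unfolding Pn_def
      by (intro exI[of _ 2] exI[of _ 0]) (simp add: numeral_2_eq_2)
    then have P2: "Pn p (q2 p) 2 (sum_list [p] + 0)" using P_cong[OF pp pI' cong] by simp
    have fq: "free_prime (q2 p)" using fp phi_free unfolding q2_def by simp
    have "\<not> alg_le p 0" "\<not> alg_le (q2 p) 0" using pp q2_prime[OF pp] unfolding is_prime_elem_def by auto
    from Bound[OF pp q2_prime[OF pp] fp fq q2_inc[OF pp pI'] this _ P2]
    show False by simp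
  qed
qed

end


theorem mainTheorem10:
  fixes I I' :: "'a::comm_monoid_add set"
    and \<phi> :: "'a \<Rightarrow> 'a"
    and \<pi> :: "'a \<Rightarrow> 'b::comm_monoid_add"
  assumes "primitive_monoid TYPE('a)"
    and "order_ideal I" and "order_ideal I'"
    and "I \<inter> I' = {0}"
    and "monoid_iso_on \<phi> I I'"
    and "crowned_pushout I \<phi> \<pi>"
  shows "primitive_monoid TYPE('b)
    \<and> bij_betw \<pi> (primes_of - I') (primes_of :: 'b set)
    \<and> (\<forall>p \<in> primes_of - I'. \<forall>q \<in> primes_of - I'.
          alg_le (\<pi> p) (\<pi> q) \<longleftrightarrow>
          (p, q) \<in> ({(p, q). p \<in> primes_of - I' \<and> q \<in> primes_of - I' \<and> alg_le p q}
                   \<union> {(p, q). p \<in> primes_of \<inter> I \<and> q \<in> primes_of - (I \<union> I') \<and> alg_less (\<phi> p) q})\<^sup>*)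
    \<and> (\<forall>p \<in> primes_of - I'. free_prime (\<pi> p) \<longleftrightarrow> free_prime p)"
proof -
  interpret c: crown I I' \<phi> \<pi>
    using assms unfolding crown_def pm_def crown_axioms_def primitive_monoid_def by blast
  have "primitive_monoid TYPE('b)"
    unfolding primitive_monoid_def antisymmetric_monoid_def
    using c.Q_antisym c.Q_pg c.Q_refine by blast
  moreover have "bij_betw \<pi> (primes_of - I') (primes_of :: 'b set)" using c.pi_bij .
  moreover have "\<forall>p \<in> primes_of - I'. \<forall>q \<in> primes_of - I'.
          alg_le (\<pi> p) (\<pi> q) \<longleftrightarrow>
          (p, q) \<in> ({(p, q). p \<in> primes_of - I' \<and> q \<in> primes_of - I' \<and> alg_le p q}
                   \<union> {(p, q). p \<in> primes_of \<inter> I \<and> q \<in> primes_of - (I \<union> I') \<and> alg_less (\<phi> p) q})\<^sup>*"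
    using c.order_char unfolding c.R_def by blast
  moreover have "\<forall>p \<in> primes_of - I'. free_prime (\<pi> p) \<longleftrightarrow> free_prime p"
    using c.free_char by blast
  ultimately show ?thesis by blast
qed

end
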